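(* Let $\boldsymbol\lambda\ne\boldsymbol\mu$ in $\Pi^l_m$ and $\lambda,\mu\in\Pi$ with $\boldsymbol\lambda\leftrightarrow\lambda$, $\boldsymbol\mu\leftrightarrow\mu$ and $|\lambda|=|\mu|=r$. Then $$a'_{\boldsymbol\lambda,\boldsymbol\mu}(1)=\varepsilon(\boldsymbol\lambda,\boldsymbol\mu)\sum_{\mathbf V}\alpha'_{\mathbf V}(1),$$ the sum running over all good sequences $\mathbf V$ with respect to $(\lambda,\mu)$, where $\varepsilon(\boldsymbol\lambda,\boldsymbol\mu)=(-1)^{\kappa(\mathbf d(\mu))+\ell(v(\omega.\boldsymbol\beta(\mu)))+\ell(v(\boldsymbol\beta(\lambda)))}$.
   Context: Fix $n,l,m\ge1$, $\mathbf s_l=(s_1,\dots,s_l)\in\mathbb Z^l$, $s=\sum s_b$. Each $k\in\mathbb Z$ is uniquely $k=c(k)+n(d(k)-1)+nl\,m(k)$, $c(k)\in\{1..n\}$, $d(k)\in\{1..l\}$; $\phi(k)=c(k)+n\,m(k)$. $\Pi^l_m$ is the set of $l$-tuples of partitions of total size $m$; $\boldsymbol\lambda\leftrightarrow\lambda$ iff $\{(\lambda^{(b)}_i+s_b+1-i,b)\}=\{(\phi(k),d(k)):k\in\{\lambda_i+s+1-i:i\ge1\}\}$. Tuples: for $\mathbf k\in\mathbb Z^r$, $\mathbf c(\mathbf k),\mathbf d(\mathbf k)$ componentwise; $\sigma.(k_1,\dots,k_r)=(k_{\sigma^{-1}(1)},\dots,k_{\sigma^{-1}(r)})$; $v(\mathbf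 k)$ is the minimal-length $\sigma$ with $\mathbf d(\mathbf k)=\sigma.\mathbf b$, $\mathbf b$ the weakly decreasing rearrangement of $\mathbf d(\mathbf k)$; $\ell$ Coxeter length; $\kappa(\mathbf a)=\#\{i<j:a_i=a_j\}$; $\omega$ longest element. For $|\lambda|=r$, $\boldsymbol\beta(\lambda)=(\lambda_i+s+1-i)_{i\le r}$, $\mathbf c(\lambda),\mathbf d(\lambda)$ those of $\boldsymbol\beta(\lambda)$. Wedge space $\Lambda^s$ (Uglov): $\mathbb C(q)$-span of symbols $v_{k_1}\wedge v_{k_2}\wedge\cdots$ ($k_i=s+1-i$ for $i\gg0$), with basis the ordered symbols ($k_1>k_2>\cdots$); any symbol is straightened by applying to adjacent pairs $v_{k_1}\wedge v_{k_2}$, $k_1\le k_2$, rules (R1)–(R4) (with $\gamma,\delta\in\{0..nl-1\}$ the residues mod $nl$ of $c(k_2)-c(k_1)$, $n(d(k_2)-d(k_1))$; sums over $i$ giving ordered two-factor wedges): (R1) $\gamma=\delta=0$: $v_{k_1}\wedge v_{k_2}=-v_{k_2}\wedge v_{k_1}$. (R2) $\gamma>0,\delta=0$: $=-q^{-1}v_{k_2}\wedge v_{k_1}-(q^{-2}-1)\sum_{i\ge1}q^{-2i+1}v_{k_2-nli}\wedge v_{k_1+nli}+(q^{-2}-1)\sum_{i\ge0}q^{-2i}v_{k_2-\gamma-nli}\wedge v_{k_1+\gamma+nli}$. (R3) $\gamma=0,\delta>0$: $=-qv_{k_2}\wedge v_{k_1}-(q^2-1)\sum_{i\ge1}q^{2i-1}v_{k_2-nli}\wedge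 v_{k_1+nli}+(q^2-1)\sum_{i\ge0}q^{2i}v_{k_2-\delta-nli}\wedge v_{k_1+\delta+nli}$. (R4) $\gamma,\delta>0$: $=-v_{k_2}\wedge v_{k_1}-(q-q^{-1})\sum_{i\ge1}\frac{q^{2i}-q^{-2i}}{q+q^{-1}}v_{k_2-nli}\wedge v_{k_1+nli}-(q-q^{-1})\sum_{i\ge0}\frac{q^{2i+1}+q^{-2i-1}}{q+q^{-1}}v_{k_2-\gamma-nli}\wedge v_{k_1+\gamma+nli}+(q-q^{-1})\sum_{i\ge0}\frac{q^{2i+1}+q^{-2i-1}}{q+q^{-1}}v_{k_2-\delta-nli}\wedge v_{k_1+\delta+nli}+(q-q^{-1})\sum_{i\ge0}\frac{q^{2i+2}-q^{-2i-2}}{q+q^{-1}}v_{k_2-\gamma-\delta-nli}\wedge v_{k_1+\gamma+\delta+nli}$. For $|\lambda|=r$: $v_\lambda=v_{k_1}\wedge v_{k_2}\wedge\cdots$, $k_i=\lambda_i+s+1-i$; $v_{\sigma.\lambda}$ is $v_\lambda$ with first $r$ indices replaced by $\sigma.\boldsymbol\beta(\lambda)$; $|\lambda,s\rangle=(-1)^{\ell(v(\boldsymbol\beta(\lambda)))}v_\lambda$; the involution is $\mathbb C$-linear, $q\mapsto q^{-1}$, $\overline{|\lambda,s\rangle}=(-1)^{\kappa(\mathbf d(\lambda))+\ell(v(\omega.\boldsymbol\beta(\lambda)))}q^{\kappa(\mathbf d(\lambda))-\kappa(\mathbf c(\lambda))}v_{\omega.\lambda}$. $a_{\boldsymbol\lambda,\boldsymbol\mu}(q)$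 is defined by $\overline{|\mu,s\rangle}=\sum_{\boldsymbol\lambda\in\Pi^l_m}a_{\boldsymbol\lambda,\boldsymbol\mu}(q)|\lambda,s\rangle$ ($\boldsymbol\lambda\leftrightarrow\lambda$). Sequences: all wedges below have first $r$ indices $\mathbf k=(k_1,\dots,k_r)$ followed by the fixed tail $s-r,s-r-1,\dots$; write $v_{\mathbf k}$. $v_{\mathbf k}\to v_{\mathbf l}$ ("adjacent") if there is $i$ with $k_i\le k_{i+1}$, $k_j>k_{j+1}$ for all $j<i$, $k_j=l_j$ for $j\notin\{i,i+1\}$, and $v_{l_i}\wedge v_{l_{i+1}}$ has nonzero coefficient $\alpha(v_{\mathbf k},v_{\mathbf l})$ in the straightening of $v_{k_i}\wedge v_{k_{i+1}}$ by the applicable rule; put $m(v_{\mathbf k},v_{\mathbf l})=0$ if $(l_i,l_{i+1})=(k_{i+1},k_i)$ (written $\overset{\bullet}{\to}$) and $1$ otherwise. An admissible sequence is $\mathbf V=(v_{\mathbf k_0}\to\cdots\to v_{\mathbf k_N})$; $\alpha_{\mathbf V}(q)=\prod_i\alpha(v_{\mathbf k_{i-1}},v_{\mathbf k_i})$, $m(\mathbf V)=\sum_i m(v_{\mathbf k_{i-1}},v_{\mathbf k_i})$. It is $(\lambda,\mu)$-admissible if $v_{\mathbf k_0}=v_{\omega.\mu}$ and $v_{\mathbf k_N}=v_\lambda$, and good if moreover $m(\mathbf V)=1$. *)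

theory Defs
  imports Complex_Main "HOL-Combinatorics.Permutations" "HOL-Analysis.Derivative"
begin

text \<open>k = c(k) + n (d(k) - 1) + n l m(k), with c(k) in 1..n and d(k) in 1..l.\<close>

definition cc :: "nat \<Rightarrow> nat \<Rightarrow> int \<Rightarrow> int" where
  "cc n l k = (k - 1) mod int n + 1"

definition dd :: "nat \<Rightarrow> nat \<Rightarrow> int \<Rightarrow> int" where
  "dd n l k = ((k - 1) div int n) mod int l + 1"

definition mm :: "nat \<Rightarrow> nat \<Rightarrow> int \<Rightarrow> int" where
  "mm n l k = (k - 1) div (int n * int l)"

definition phi :: "nat \<Rightarrow> nat \<Rightarrow> int \<Rightarrow> int" where
  "phi n l k = cc n l k + int n * mm n l k"

text \<open>A partition is a weakly decreasing list of positive naturals; its i-th part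
  (i \<ge> 1) is the (i-1)-th list entry, or 0 beyond the length.\<close>

definition is_partition :: "nat list \<Rightarrow> bool" where
  "is_partition p \<longleftrightarrow> sorted_wrt (\<ge>) p \<and> 0 \<notin> set p"

definition part :: "nat list \<Rightarrow> nat \<Rightarrow> nat" where
  "part p i = (if 1 \<le> i \<and> i \<le> length p then p ! (i - 1) else 0)"

definition psize :: "nat list \<Rightarrow> nat" where
  "psize p = sum_list p"

definition multipartitions :: "nat \<Rightarrow> nat \<Rightarrow> nat list list set" where
  "multipartitions l m = {P. length P = l \<and> (\<forall>p\<in>set P. is_partition p) \<and> sum_list (map psize P) = m}"

text \<open>The correspondence between multipartitions and partitions (sl = charge vector s_l,
  s = sum of its entries; component b is indexed 1..l and stored at list index b-1).\<close>
definition corresp :: "nat \<Rightarrow> nat \<Rightarrow> int list \<Rightarrow> nat list list \<Rightarrow> nat list \<Rightarrow> bool" where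
  "corresp n l sl P p \<longleftrightarrow>
     {(int (part (P ! (b - 1)) i) + sl ! (b - 1) + 1 - int i, int b) | i b. 1 \<le> i \<and> 1 \<le> b \<and> b \<le> l}
   = {(phi n l k, dd n l k) | k. \<exists>i\<ge>1. k = int (part p i) + sum_list sl + 1 - int i}"

definition beta :: "int \<Rightarrow> nat list \<Rightarrow> int list" where
  "beta s p = map (\<lambda>i. int (part p i) + s + 1 - int i) [1..<psize p + 1]"

text \<open>Permutations of positions 0..r-1 (0-based); sigma.(k)_j = k_{sigma^{-1}(j)}.\<close>
definition act :: "(nat \<Rightarrow> nat) \<Rightarrow> 'a list \<Rightarrow> 'a list" where
  "act \<sigma> k = map (\<lambda>j. k ! inv \<sigma> j) [0..<length k]"

definition cox_len :: "nat \<Rightarrow> (nat \<Rightarrow> nat) \<Rightarrow> nat" where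
  "cox_len r \<sigma> = card {(i, j). i < j \<and> j < r \<and> \<sigma> i > \<sigma> j}"

text \<open>ell(v(k)): the length of the minimal-length sigma with d(k) = sigma.b, b the
  weakly decreasing rearrangement of d(k).\<close>
definition len_v :: "nat \<Rightarrow> nat \<Rightarrow> int list \<Rightarrow> nat" where
  "len_v n l k = (let d = map (dd n l) k; b = rev (sort d) in
     Min (cox_len (length k) ` {\<sigma>. \<sigma> permutes {0..<length k} \<and> act \<sigma> b = d}))"

definition kappa :: "int list \<Rightarrow> nat" where
  "kappa a = card {(i, j). i < j \<and> j < length a \<and> a ! i = a ! j}"

text \<open>The longest element omega acts on r-tuples by reversal.\<close>
definition omega_act :: "'a list \<Rightarrow> 'a list" where
  "omega_act k = rev k"

text \<open>Coefficient of the two-factor wedge v_a \<and> v_b in the straightening of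
  v_{k1} \<and> v_{k2} (k1 \<le> k2) by the applicable rule (R1)-(R4).
  hit x i a b: the term v_{k2-x-nli} \<and> v_{k1+x+nli} equals v_a \<and> v_b and is ordered.\<close>
definition straight_coeff :: "nat \<Rightarrow> nat \<Rightarrow> int \<Rightarrow> int \<Rightarrow> int \<Rightarrow> int \<Rightarrow> real \<Rightarrow> real" where
  "straight_coeff n l k1 k2 a b q =
    (let N = int n * int l;
         \<gamma> = (cc n l k2 - cc n l k1) mod N;
         \<delta> = (int n * (dd n l k2 - dd n l k1)) mod N;
         hit = (\<lambda>x (i::nat). a = k2 - x - N * int i \<and> b = k1 + x + N * int i \<and> a > b);
         lead = (a = k2 \<and> b = k1);
         S = (\<lambda>x (lo::nat) f. \<Sum>i\<in>{i. lo \<le> i \<and> hit x i}. f i)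
     in if \<gamma> = 0 \<and> \<delta> = 0 then (if lead then -1 else 0)
        else if \<gamma> > 0 \<and> \<delta> = 0 then
          (if lead then - inverse q else 0)
          - (q powi (-2) - 1) * S 0 1 (\<lambda>i. q powi (- 2 * int i + 1))
          + (q powi (-2) - 1) * S \<gamma> 0 (\<lambda>i. q powi (- 2 * int i))
        else if \<gamma> = 0 \<and> \<delta> > 0 then
          (if lead then - q else 0)
          - (q\<^sup>2 - 1) * S 0 1 (\<lambda>i. q powi (2 * int i - 1))
          + (q\<^sup>2 - 1) * S \<delta> 0 (\<lambda>i. q powi (2 * int i))
        else
          (if lead then -1 else 0)
          - (q - inverse q) * S 0 1 (\<lambda>i. (q powi (2 * int i) - q powi (- 2 * int i)) / (q + inverse q))
          - (q - inverse q) * S \<gamma> 0 (\<lambda>i. (q powi (2 * int i + 1) + q powi (- 2 * int i - 1)) / (q + inverse q))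
          + (q - inverse q) * S \<delta> 0 (\<lambda>i. (q powi (2 * int i + 1) + q powi (- 2 * int i - 1)) / (q + inverse q))
          + (q - inverse q) * S (\<gamma> + \<delta>) 0 (\<lambda>i. (q powi (2 * int i + 2) - q powi (- 2 * int i - 2)) / (q + inverse q)))"

text \<open>Wedges are represented by their first r indices (a list k of length r); the fixed tail
  s-r, s-r-1, ... is implicit. Indices are 0-based here.
  step_pos k i: i is the leftmost position with k_i \<le> k_{i+1}.\<close>
definition step_pos :: "int list \<Rightarrow> nat \<Rightarrow> bool" where
  "step_pos k i \<longleftrightarrow> i + 1 < length k \<and> k ! i \<le> k ! (i + 1) \<and> (\<forall>j<i. k ! j > k ! (j + 1))"

definition step_coeff :: "nat \<Rightarrow> nat \<Rightarrow> int list \<Rightarrow> int list \<Rightarrow> real \<Rightarrow> real" where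
  "step_coeff n l k k' = (\<lambda>q. straight_coeff n l (k ! (THE i. step_pos k i)) (k ! ((THE i. step_pos k i) + 1))
                                  (k' ! (THE i. step_pos k i)) (k' ! ((THE i. step_pos k i) + 1)) q)"

definition adjacent :: "nat \<Rightarrow> nat \<Rightarrow> int list \<Rightarrow> int list \<Rightarrow> bool" where
  "adjacent n l k k' \<longleftrightarrow> length k' = length k \<and>
     (\<exists>i. step_pos k i \<and> (\<forall>j<length k. j \<noteq> i \<and> j \<noteq> i + 1 \<longrightarrow> k' ! j = k ! j) \<and>
          (\<lambda>q. straight_coeff n l (k ! i) (k ! (i + 1)) (k' ! i) (k' ! (i + 1)) q) \<noteq> (\<lambda>q. 0))"

definition mstep :: "int list \<Rightarrow> int list \<Rightarrow> nat" where
  "mstep k k' = (if \<exists>i. step_pos k i \<and> k' ! i = k ! (i + 1) \<and> k' ! (i + 1) = k ! i then 0 else 1)"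

definition admissible :: "nat \<Rightarrow> nat \<Rightarrow> int list list \<Rightarrow> bool" where
  "admissible n l V \<longleftrightarrow> V \<noteq> [] \<and> (\<forall>j. j + 1 < length V \<longrightarrow> adjacent n l (V ! j) (V ! (j + 1)))"

definition alphaV :: "nat \<Rightarrow> nat \<Rightarrow> int list list \<Rightarrow> real \<Rightarrow> real" where
  "alphaV n l V = (\<lambda>q. \<Prod>j<length V - 1. step_coeff n l (V ! j) (V ! (j + 1)) q)"

definition mV :: "int list list \<Rightarrow> nat" where
  "mV V = (\<Sum>j<length V - 1. mstep (V ! j) (V ! (j + 1)))"

definition good_seq :: "nat \<Rightarrow> nat \<Rightarrow> int \<Rightarrow> nat list \<Rightarrow> nat list \<Rightarrow> int list list \<Rightarrow> bool" where
  "good_seq n l s lam mu V \<longleftrightarrow> admissible n l V \<and> hd V = omega_act (beta s mu) \<and>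
     last V = beta s lam \<and> mV V = 1"

text \<open>E k w q = coefficient of the ordered wedge v_w in the expansion of v_k, obtained by
  straightening (always at the leftmost non-ordered adjacent pair).\<close>
definition straightening_ok :: "nat \<Rightarrow> nat \<Rightarrow> (int list \<Rightarrow> int list \<Rightarrow> real \<Rightarrow> real) \<Rightarrow> bool" where
  "straightening_ok n l E \<longleftrightarrow> (\<forall>k.
     (sorted_wrt (>) k \<longrightarrow> E k = (\<lambda>w q. if w = k then 1 else 0)) \<and>
     (\<not> sorted_wrt (>) k \<longrightarrow>
        E k = (\<lambda>w q. \<Sum>k'\<in>{k'. adjacent n l k k'}. step_coeff n l k k' q * E k' w q)))"

definition expansion :: "nat \<Rightarrow> nat \<Rightarrow> int list \<Rightarrow> int list \<Rightarrow> real \<Rightarrow> real" where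
  "expansion n l = (THE E. straightening_ok n l E)"

text \<open>a_{lambda,mu}(q) for partitions lambda, mu (of the same size r):
  bar|mu,s> = (-1)^(kappa(d(mu)) + ell(v(omega.beta(mu)))) q^(kappa(d(mu)) - kappa(c(mu))) v_{omega.mu},
  v_{omega.mu} = sum_w E(omega.beta(mu), w) v_w, v_lambda = (-1)^ell(v(beta(lambda))) |lambda,s>.\<close>
definition a_part :: "nat \<Rightarrow> nat \<Rightarrow> int \<Rightarrow> nat list \<Rightarrow> nat list \<Rightarrow> real \<Rightarrow> real" where
  "a_part n l s lam mu = (\<lambda>q.
     (-1) ^ (kappa (map (dd n l) (beta s mu)) + len_v n l (omega_act (beta s mu)))
     * q powi (int (kappa (map (dd n l) (beta s mu))) - int (kappa (map (cc n l) (beta s mu))))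
     * (-1) ^ len_v n l (beta s lam)
     * expansion n l (omega_act (beta s mu)) (beta s lam) q)"

definition a_coef :: "nat \<Rightarrow> nat \<Rightarrow> int list \<Rightarrow> nat list list \<Rightarrow> nat list list \<Rightarrow> real \<Rightarrow> real" where
  "a_coef n l sl P Q = a_part n l (sum_list sl)
     (THE p. is_partition p \<and> corresp n l sl P p) (THE p. is_partition p \<and> corresp n l sl Q p)"

definition eps :: "nat \<Rightarrow> nat \<Rightarrow> int \<Rightarrow> nat list \<Rightarrow> nat list \<Rightarrow> real" where
  "eps n l s lam mu = (-1) ^ (kappa (map (dd n l) (beta s mu)) + len_v n l (omega_act (beta s mu))
                              + len_v n l (beta s lam))"

end

theory Submission
  imports Defs
begin

definition hitf :: "nat \<Rightarrow> nat \<Rightarrow> int \<Rightarrow> int \<Rightarrow> int \<Rightarrow> int \<Rightarrow> int \<Rightarrow> nat \<Rightarrow> bool" where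
  "hitf n l k1 k2 a b x i = (a = k2 - x - int n * int l * int i \<and> b = k1 + x + int n * int l * int i \<and> a > b)"
definition Sf :: "nat \<Rightarrow> nat \<Rightarrow> int \<Rightarrow> int \<Rightarrow> int \<Rightarrow> int \<Rightarrow> int \<Rightarrow> nat \<Rightarrow> (nat \<Rightarrow> real \<Rightarrow> real) \<Rightarrow> real \<Rightarrow> real" where
  "Sf n l k1 k2 a b x lo f q = (\<Sum>i\<in>{i. lo \<le> i \<and> hitf n l k1 k2 a b x i}. f i q)"
definition gam :: "nat \<Rightarrow> nat \<Rightarrow> int \<Rightarrow> int \<Rightarrow> int" where
  "gam n l k1 k2 = (cc n l k2 - cc n l k1) mod (int n * int l)"
definition del :: "nat \<Rightarrow> nat \<Rightarrow> int \<Rightarrow> int \<Rightarrow> int" where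
  "del n l k1 k2 = (int n * (dd n l k2 - dd n l k1)) mod (int n * int l)"

lemma sc_eq: "straight_coeff n l k1 k2 a b q = (
     if gam n l k1 k2 = 0 \<and> del n l k1 k2 = 0 then (if a = k2 \<and> b = k1 then -1 else 0)
        else if gam n l k1 k2 > 0 \<and> del n l k1 k2 = 0 then
          (if a = k2 \<and> b = k1 then - inverse q else 0)
          - (q powi (-2) - 1) * Sf n l k1 k2 a b 0 1 (\<lambda>i q. q powi (- 2 * int i + 1)) q
          + (q powi (-2) - 1) * Sf n l k1 k2 a b (gam n l k1 k2) 0 (\<lambda>i q. q powi (- 2 * int i)) q
        else if gam n l k1 k2 = 0 \<and> del n l k1 k2 > 0 then
          (if a = k2 \<and> b = k1 then - q else 0)
          - (q\<^sup>2 - 1) * Sf n l k1 k2 a b 0 1 (\<lambda>i q. q powi (2 * int i - 1)) q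
          + (q\<^sup>2 - 1) * Sf n l k1 k2 a b (del n l k1 k2) 0 (\<lambda>i q. q powi (2 * int i)) q
        else
          (if a = k2 \<and> b = k1 then -1 else 0)
          - (q - inverse q) * Sf n l k1 k2 a b 0 1 (\<lambda>i q. (q powi (2 * int i) - q powi (- 2 * int i)) / (q + inverse q)) q
          - (q - inverse q) * Sf n l k1 k2 a b (gam n l k1 k2) 0 (\<lambda>i q. (q powi (2 * int i + 1) + q powi (- 2 * int i - 1)) / (q + inverse q)) q
          + (q - inverse q) * Sf n l k1 k2 a b (del n l k1 k2) 0 (\<lambda>i q. (q powi (2 * int i + 1) + q powi (- 2 * int i - 1)) / (q + inverse q)) q
          + (q - inverse q) * Sf n l k1 k2 a b (gam n l k1 k2 + del n l k1 k2) 0 (\<lambda>i q. (q powi (2 * int i + 2) - q powi (- 2 * int i - 2)) / (q + inverse q)) q)"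
  unfolding straight_coeff_def Let_def hitf_def Sf_def gam_def del_def by (rule refl)

lemma gam_nn: "n \<ge> 1 \<Longrightarrow> l \<ge> 1 \<Longrightarrow> gam n l k1 k2 \<ge> 0"
  unfolding gam_def by (rule pos_mod_sign) simp
lemma del_nn: "n \<ge> 1 \<Longrightarrow> l \<ge> 1 \<Longrightarrow> del n l k1 k2 \<ge> 0"
  unfolding del_def by (rule pos_mod_sign) simp

lemma sc_at1: "straight_coeff n l k1 k2 a b 1 = (if a = k2 \<and> b = k1 then -1 else 0)"
  unfolding sc_eq by simp

lemma sc_zero:
  assumes "n \<ge> 1" "l \<ge> 1" and nl: "\<not> (a = k2 \<and> b = k1)"
    and H: "\<And>x (i::nat). 0 \<le> x \<Longrightarrow> 0 < x \<or> 0 < i \<Longrightarrow> \<not> hitf n l k1 k2 a b x i"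
  shows "straight_coeff n l k1 k2 a b q = 0"
proof -
  have E: "Sf n l k1 k2 a b x lo f q = 0"
    if x0: "0 \<le> x" "0 < x \<or> 0 < lo" for x lo f
  proof -
    have "{i. lo \<le> i \<and> hitf n l k1 k2 a b x i} = {}"
    proof -
      { fix i assume i: "lo \<le> i" "hitf n l k1 k2 a b x i"
        then have "0 < x \<or> 0 < i" using x0 by auto
        then have False using H[of x i] x0(1) i by blast }
      then show ?thesis by blast
    qed
    then show ?thesis unfolding Sf_def by (simp only: sum.empty)
  qed
  have g: "gam n l k1 k2 \<ge> 0" "del n l k1 k2 \<ge> 0" using assms gam_nn del_nn by auto
  show ?thesis
  proof (cases "gam n l k1 k2 = 0 \<and> del n l k1 k2 = 0")
    case True then show ?thesis unfolding sc_eq using nl by simp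
  next
    case F1: False
    show ?thesis
    proof (cases "gam n l k1 k2 > 0 \<and> del n l k1 k2 = 0")
      case True then show ?thesis unfolding sc_eq using nl by (auto simp: E)
    next
      case F2: False
      show ?thesis
      proof (cases "gam n l k1 k2 = 0 \<and> del n l k1 k2 > 0")
        case True then show ?thesis unfolding sc_eq using nl F1 by (auto simp: E)
      next
        case F3: False
        then have "gam n l k1 k2 > 0" "del n l k1 k2 > 0" using F1 F2 g by auto
        then show ?thesis unfolding sc_eq using nl F1 F2 F3 by (auto simp: E)
      qed
    qed
  qed
qed

definition D1 :: "(real \<Rightarrow> real) \<Rightarrow> bool" where
  "D1 f \<longleftrightarrow> (\<exists>D. (f has_field_derivative D) (at 1))"

lemma D1_add: "D1 f \<Longrightarrow> D1 g \<Longrightarrow> D1 (\<lambda>q. f q + g q)"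
  unfolding D1_def using DERIV_add by blast
lemma D1_diff: "D1 f \<Longrightarrow> D1 g \<Longrightarrow> D1 (\<lambda>q. f q - g q)"
  unfolding D1_def using DERIV_diff by blast
lemma D1_mult: "D1 f \<Longrightarrow> D1 g \<Longrightarrow> D1 (\<lambda>q. f q * g q)"
  unfolding D1_def using DERIV_mult by blast
lemma D1_neg: "D1 f \<Longrightarrow> D1 (\<lambda>q. - f q)"
  unfolding D1_def using DERIV_minus by blast
lemma D1_const: "D1 (\<lambda>q. c)"
  unfolding D1_def using DERIV_const by blast
lemma D1_id: "D1 (\<lambda>q. q)"
  unfolding D1_def using DERIV_ident by blast
lemma D1_sq: "D1 (\<lambda>q. q\<^sup>2)"
  unfolding D1_def using DERIV_pow by blast
lemma D1_powi: "D1 (\<lambda>q. q powi k)"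
  unfolding D1_def by (rule exI, rule DERIV_power_int[OF DERIV_ident]) simp
lemma D1_inv: "D1 (\<lambda>q. inverse q)"
  unfolding D1_def by (rule exI, rule DERIV_inverse') (auto intro: DERIV_ident)
lemma D1_if: "(C \<Longrightarrow> D1 f) \<Longrightarrow> (\<not> C \<Longrightarrow> D1 g) \<Longrightarrow> D1 (\<lambda>q. if C then f q else g q)"
  by (cases C) auto
lemma D1_sum: "(\<And>i. i \<in> A \<Longrightarrow> D1 (f i)) \<Longrightarrow> D1 (\<lambda>q. \<Sum>i\<in>A. f i q)"
proof -
  assume a: "\<And>i. i \<in> A \<Longrightarrow> D1 (f i)"
  have "\<forall>i. \<exists>D. i \<in> A \<longrightarrow> (f i has_field_derivative D) (at 1)" using a unfolding D1_def by blast
  then have "\<exists>D. \<forall>i. i \<in> A \<longrightarrow> (f i has_field_derivative D i) (at 1)" by (rule choice)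
  then obtain D where "\<And>i. i \<in> A \<Longrightarrow> (f i has_field_derivative D i) (at 1)" by blast
  then have "((\<lambda>q. \<Sum>i\<in>A. f i q) has_field_derivative (\<Sum>i\<in>A. D i)) (at 1)"
    by (intro DERIV_sum) auto
  then show ?thesis unfolding D1_def by blast
qed
lemma D1_prod: "(\<And>i. i \<in> A \<Longrightarrow> D1 (f i)) \<Longrightarrow> D1 (\<lambda>q. \<Prod>i\<in>A. f i q)"
proof -
  assume a: "\<And>i. i \<in> A \<Longrightarrow> D1 (f i)"
  have "\<forall>i. \<exists>D. i \<in> A \<longrightarrow> (f i has_field_derivative D) (at 1)" using a unfolding D1_def by blast
  then have "\<exists>D. \<forall>i. i \<in> A \<longrightarrow> (f i has_field_derivative D i) (at 1)" by (rule choice)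
  then obtain D where "\<And>i. i \<in> A \<Longrightarrow> (f i has_field_derivative D i) (at 1)" by blast
  then show ?thesis unfolding D1_def using has_field_derivative_prod[of A f D 1] by blast
qed
lemma D1_divq: "D1 f \<Longrightarrow> D1 (\<lambda>q. f q / (q + inverse q))"
proof -
  assume "D1 f"
  then obtain D where d: "(f has_field_derivative D) (at 1)" unfolding D1_def by blast
  have "((\<lambda>q. q + inverse q :: real) has_field_derivative (1 + (- (inverse 1 * 1 * inverse 1)))) (at 1)"
    by (intro DERIV_add DERIV_ident DERIV_inverse') auto
  then show ?thesis using DERIV_divide[of f D 1 UNIV "\<lambda>q. q + inverse q"] d unfolding D1_def by auto
qed
lemma D1_Sf: "(\<And>i. D1 (f i)) \<Longrightarrow> D1 (\<lambda>q. Sf n l k1 k2 a b x lo f q)"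
  unfolding Sf_def by (rule D1_sum) auto

lemma sc_D1: "D1 (\<lambda>q. straight_coeff n l k1 k2 a b q)"
  unfolding sc_eq
  apply (intro D1_if)
  apply (rule D1_const)+
  apply (intro D1_add D1_diff D1_mult D1_if D1_neg D1_const D1_inv D1_powi D1_Sf)
  apply (intro D1_add D1_diff D1_mult D1_if D1_neg D1_const D1_id D1_sq D1_powi D1_Sf)
  apply (intro D1_add D1_diff D1_mult D1_if D1_const D1_inv D1_powi D1_Sf D1_divq)
  apply (rule D1_id)+
  done

section \<open>Adjacency\<close>

lemma step_pos_unique: "step_pos k i \<Longrightarrow> step_pos k j \<Longrightarrow> i = j"
  unfolding step_pos_def by (metis linorder_neqE_nat not_le)

lemma the_step: "step_pos k i \<Longrightarrow> (THE i. step_pos k i) = i"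
  using step_pos_unique by blast

lemma step_coeff_eq: "step_pos k i \<Longrightarrow>
   step_coeff n l k k' = (\<lambda>q. straight_coeff n l (k ! i) (k ! (i + 1)) (k' ! i) (k' ! (i + 1)) q)"
  unfolding step_coeff_def using the_step by simp

lemma step_coeff_D1: "D1 (step_coeff n l k k')"
  unfolding step_coeff_def by (rule sc_D1)

lemma sorted_no_step: "sorted_wrt (>) k \<Longrightarrow> \<not> step_pos k i"
  unfolding step_pos_def using sorted_wrt_nth_less[of "(>)" k i "i+1"] by force

lemma sorted_no_adj: "sorted_wrt (>) k \<Longrightarrow> \<not> adjacent n l k k'"
  unfolding adjacent_def using sorted_no_step by blast

lemma unsorted_step: assumes "\<not> sorted_wrt (>) k" shows "\<exists>i. step_pos k i"
proof -
  have "\<exists>i. Suc i < length k \<and> \<not> k ! i > k ! Suc i"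
    using assms sorted_wrt_iff_nth_Suc_transp[of "(>)" k] by (auto simp: transp_def)
  then have ex: "\<exists>i. i + 1 < length k \<and> k ! i \<le> k ! (i + 1)" by auto
  define i where "i = (LEAST i. i + 1 < length k \<and> k ! i \<le> k ! (i + 1))"
  have "i + 1 < length k \<and> k ! i \<le> k ! (i + 1)" unfolding i_def by (rule LeastI_ex[OF ex])
  moreover have "\<forall>j<i. k ! j > k ! (j + 1)"
  proof (intro allI impI)
    fix j assume "j < i"
    then have "\<not> (j + 1 < length k \<and> k ! j \<le> k ! (j + 1))" unfolding i_def by (rule not_less_Least)
    then show "k ! j > k ! (j + 1)" using \<open>j < i\<close> calculation by auto
  qed
  ultimately show ?thesis unfolding step_pos_def by blast
qed

lemma adj_char:
  assumes n: "n \<ge> 1" "l \<ge> 1" and adj: "adjacent n l k k'"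
  shows "\<exists>i. step_pos k i \<and> length k' = length k \<and>
    (\<forall>j<length k. j \<noteq> i \<and> j \<noteq> i + 1 \<longrightarrow> k' ! j = k ! j) \<and>
    ((k' ! i = k ! (i + 1) \<and> k' ! (i + 1) = k ! i) \<or>
     (k ! i < k' ! (i + 1) \<and> k' ! (i + 1) < k' ! i \<and> k' ! i < k ! (i + 1) \<and> k' ! i + k' ! (i + 1) = k ! i + k ! (i + 1)))"
proof -
  from adj obtain i where i: "step_pos k i" "length k' = length k"
    "\<forall>j<length k. j \<noteq> i \<and> j \<noteq> i + 1 \<longrightarrow> k' ! j = k ! j"
    and nz: "(\<lambda>q. straight_coeff n l (k ! i) (k ! (i + 1)) (k' ! i) (k' ! (i + 1)) q) \<noteq> (\<lambda>q. 0)"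
    unfolding adjacent_def by blast
  have "(k' ! i = k ! (i + 1) \<and> k' ! (i + 1) = k ! i) \<or>
     (k ! i < k' ! (i + 1) \<and> k' ! (i + 1) < k' ! i \<and> k' ! i < k ! (i + 1) \<and> k' ! i + k' ! (i + 1) = k ! i + k ! (i + 1))"
  proof (rule ccontr)
    assume c: "\<not> ?thesis"
    have "\<And>q. straight_coeff n l (k ! i) (k ! (i + 1)) (k' ! i) (k' ! (i + 1)) q = 0"
    proof (rule sc_zero[OF n])
      show "\<not> (k' ! i = k ! (i + 1) \<and> k' ! (i + 1) = k ! i)" using c by blast
      fix x :: int and j :: nat assume x: "0 \<le> x" "0 < x \<or> 0 < j"
      have N: "int n * int l > 0" using n by simp
      have "int n * int l * int j \<ge> 0" using N by simp
      moreover have "j > 0 \<Longrightarrow> int n * int l * int j > 0" using N by simp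
      ultimately have "x + int n * int l * int j > 0" using x by linarith
      then show "\<not> hitf n l (k ! i) (k ! (i + 1)) (k' ! i) (k' ! (i + 1)) x j"
        using c unfolding hitf_def by auto
    qed
    then show False using nz by auto
  qed
  then show ?thesis using i by blast
qed

lemma adj_swap_eq:
  assumes "step_pos k i" "length k' = length k"
    "\<And>j. j < length k \<Longrightarrow> j \<noteq> i \<Longrightarrow> j \<noteq> i + 1 \<Longrightarrow> k' ! j = k ! j"
    "k' ! i = k ! (i + 1)" "k' ! (i + 1) = k ! i"
  shows "k' = k[i := k ! (i + 1), i + 1 := k ! i]"
  using assms unfolding step_pos_def by (intro nth_equalityI) (auto simp: nth_list_update)

lemma mstep_eq: "step_pos k i \<Longrightarrow> mstep k k' = (if k' ! i = k ! (i + 1) \<and> k' ! (i + 1) = k ! i then 0 else 1)"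
  unfolding mstep_def using step_pos_unique by metis

lemma step_coeff_at1:
  assumes "step_pos k i"
  shows "step_coeff n l k k' 1 = (if mstep k k' = 0 then -1 else 0)"
  using assms by (simp add: step_coeff_eq mstep_eq sc_at1)

lemma sc_diag: "straight_coeff n l x x x x q = -1"
proof -
  have g: "gam n l x x = 0" "del n l x x = 0" unfolding gam_def del_def by auto
  show ?thesis unfolding sc_eq g by (simp only: simp_thms if_True)
qed

lemma stuck_adj:
  assumes n: "n \<ge> 1" "l \<ge> 1" and sp: "step_pos k i" and eq: "k ! i = k ! (i + 1)"
  shows "adjacent n l k k' \<longleftrightarrow> k' = k"
proof
  assume adj: "adjacent n l k k'"
  obtain i' where i': "step_pos k i'" "length k' = length k"
    "\<forall>j<length k. j \<noteq> i' \<and> j \<noteq> i' + 1 \<longrightarrow> k' ! j = k ! j"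
    "(k' ! i' = k ! (i' + 1) \<and> k' ! (i' + 1) = k ! i') \<or>
     (k ! i' < k' ! (i' + 1) \<and> k' ! (i' + 1) < k' ! i' \<and> k' ! i' < k ! (i' + 1) \<and> k' ! i' + k' ! (i' + 1) = k ! i' + k ! (i' + 1))"
    using adj_char[OF n adj] by blast
  have ii: "i' = i" using step_pos_unique sp i'(1) by blast
  have sw: "k' ! i = k ! (i + 1) \<and> k' ! (i + 1) = k ! i" using i'(4) eq unfolding ii by auto
  show "k' = k"
  proof (rule nth_equalityI)
    show "length k' = length k" by (rule i'(2))
    fix j assume "j < length k'"
    then show "k' ! j = k ! j" using i'(2,3) sw eq unfolding ii by (cases "j = i \<or> j = i + 1") auto
  qed
next
  assume k': "k' = k"
  have "straight_coeff n l (k ! i) (k ! (i + 1)) (k' ! i) (k' ! (i + 1)) q = -1" for q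
    unfolding k' eq[symmetric] by (rule sc_diag)
  then have "(\<lambda>q. straight_coeff n l (k ! i) (k ! (i + 1)) (k' ! i) (k' ! (i + 1)) q) \<noteq> (\<lambda>q. 0)"
    by (metis zero_neq_neg_one)
  then show "adjacent n l k k'" unfolding adjacent_def k' using sp by blast
qed

lemma stuck_coeff:
  assumes "step_pos k i" "k ! i = k ! (i + 1)"
  shows "step_coeff n l k k q = -1"
  unfolding step_coeff_eq[OF assms(1)] assms(2)[symmetric] by (rule sc_diag)

definition pot :: "int list \<Rightarrow> int" where
  "pot k = (\<Sum>j<length k. int j * k ! j)"

definition lbd :: "int \<Rightarrow> int list \<Rightarrow> bool" where
  "lbd lo k \<longleftrightarrow> (\<forall>j<length k. lo \<le> k ! j)"

lemma pot_lb: "lbd lo k \<Longrightarrow> pot k \<ge> lo * (\<Sum>j<length k. int j)"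
proof -
  assume "lbd lo k"
  then have "(\<Sum>j<length k. int j * lo) \<le> pot k" unfolding pot_def lbd_def
    by (intro sum_mono) (simp add: mult_left_mono)
  then show ?thesis by (simp add: sum_distrib_left mult.commute)
qed

lemma pot_change:
  assumes "i + 1 < length k" "length k' = length k"
    "\<And>j. j < length k \<Longrightarrow> j \<noteq> i \<Longrightarrow> j \<noteq> i + 1 \<Longrightarrow> k' ! j = k ! j"
  shows "pot k' - pot k = int i * (k' ! i - k ! i) + int (i + 1) * (k' ! (i + 1) - k ! (i + 1))"
proof -
  have "pot k' - pot k = (\<Sum>j<length k. int j * (k' ! j - k ! j))"
    unfolding pot_def assms(2) by (simp add: sum_subtractf right_diff_distrib)
  also have "\<dots> = (\<Sum>j\<in>{i, i + 1}. int j * (k' ! j - k ! j))"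
    using assms by (intro sum.mono_neutral_right) auto
  also have "\<dots> = int i * (k' ! i - k ! i) + int (i + 1) * (k' ! (i + 1) - k ! (i + 1))" by simp
  finally show ?thesis .
qed

lemma adj_decr:
  assumes n: "n \<ge> 1" "l \<ge> 1" and adj: "adjacent n l k k'" and ne: "k' \<noteq> k"
  shows "pot k' < pot k" "lbd lo k \<Longrightarrow> lbd lo k'" "length k' = length k"
proof -
  obtain i where i: "step_pos k i" "length k' = length k"
    "\<forall>j<length k. j \<noteq> i \<and> j \<noteq> i + 1 \<longrightarrow> k' ! j = k ! j"
    "(k' ! i = k ! (i + 1) \<and> k' ! (i + 1) = k ! i) \<or>
     (k ! i < k' ! (i + 1) \<and> k' ! (i + 1) < k' ! i \<and> k' ! i < k ! (i + 1) \<and> k' ! i + k' ! (i + 1) = k ! i + k ! (i + 1))"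
    using adj_char[OF n adj] by blast
  have lt: "k ! i < k ! (i + 1)"
  proof (rule ccontr)
    assume "\<not> ?thesis"
    then have "k ! i = k ! (i + 1)" using i(1) unfolding step_pos_def by auto
    then show False using stuck_adj[OF n i(1)] adj ne by blast
  qed
  have il: "i + 1 < length k" using i(1) unfolding step_pos_def by auto
  have "pot k' - pot k = int i * (k' ! i - k ! i) + int (i + 1) * (k' ! (i + 1) - k ! (i + 1))"
    by (rule pot_change[OF il i(2) i(3)[rule_format]]) auto
  also have "\<dots> = int i * (k' ! i + k' ! (i + 1) - k ! i - k ! (i + 1)) + (k' ! (i + 1) - k ! (i + 1))"
    by (simp add: algebra_simps)
  also have "\<dots> = k' ! (i + 1) - k ! (i + 1)" using i(4) by auto
  also have "\<dots> < 0" using i(4) lt by auto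
  finally show "pot k' < pot k" by simp
  show "length k' = length k" by (rule i(2))
  assume lb: "lbd lo k"
  have "lo \<le> k ! i" using lb il unfolding lbd_def by auto
  have "k ! i \<le> k' ! i" "k ! i \<le> k' ! (i + 1)" using i(4) lt by auto
  show "lbd lo k'" unfolding lbd_def
  proof (intro allI impI)
    fix j assume j: "j < length k'"
    show "lo \<le> k' ! j"
    proof (cases "j = i \<or> j = i + 1")
      case True then show ?thesis using \<open>lo \<le> k ! i\<close> \<open>k ! i \<le> k' ! i\<close> \<open>k ! i \<le> k' ! (i + 1)\<close> by auto
    next
      case False then show ?thesis using i(2,3) j lb unfolding lbd_def by auto
    qed
  qed
qed

lemma adj_induct:
  assumes n: "n \<ge> 1" "l \<ge> 1"
    and step: "\<And>k. (\<And>k'. adjacent n l k k' \<Longrightarrow> k' \<noteq> k \<Longrightarrow> P k') \<Longrightarrow> P k"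
  shows "P k0"
proof -
  define lo where "lo = Min (insert 0 (set k0))"
  have lb0: "lbd lo k0" unfolding lbd_def lo_def
  proof (intro allI impI)
    fix j assume "j < length k0"
    then have "k0 ! j \<in> insert 0 (set k0)" by simp
    then show "Min (insert 0 (set k0)) \<le> k0 ! j" by (intro Min_le) auto
  qed
  define C where "C = (\<Sum>j<length k0. int j)"
  have main: "\<forall>k. length k = length k0 \<and> lbd lo k \<and> nat (pot k - lo * C) = M \<longrightarrow> P k" for M
  proof (induction M rule: less_induct)
    case (less M)
    show ?case
    proof (intro allI impI)
      fix k assume k: "length k = length k0 \<and> lbd lo k \<and> nat (pot k - lo * C) = M"
      show "P k"
      proof (rule step)
        fix k' assume a: "adjacent n l k k'" "k' \<noteq> k"
        have k1: "lbd lo k" using k by blast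
        have d1: "pot k' < pot k" by (rule adj_decr(1)[OF n a])
        have d2: "lbd lo k'" by (rule adj_decr(2)[OF n a k1])
        have d3: "length k' = length k" by (rule adj_decr(3)[OF n a])
        have "pot k' \<ge> lo * C" using pot_lb[OF d2] d3 k unfolding C_def by simp
        then have lt: "nat (pot k' - lo * C) < M" using d1 k by linarith
        have "\<forall>k. length k = length k0 \<and> lbd lo k \<and> nat (pot k - lo * C) = nat (pot k' - lo * C) \<longrightarrow> P k"
          by (rule less.IH[OF lt])
        then show "P k'" using d2 d3 k by simp
      qed
    qed
  qed
  show ?thesis using main[of "nat (pot k0 - lo * C)"] lb0 by simp
qed

lemma finite_adj:
  assumes n: "n \<ge> 1" "l \<ge> 1"
  shows "finite {k'. adjacent n l k k'}"
proof (cases "\<exists>i. step_pos k i")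
  case False
  then show ?thesis unfolding adjacent_def by simp
next
  case True
  then obtain i where i: "step_pos k i" by blast
  have "{k'. adjacent n l k k'} \<subseteq> (\<lambda>(a, b). k[i := a, i + 1 := b]) ` ({k ! i..k ! (i + 1)} \<times> {k ! i..k ! (i + 1)})"
  proof
    fix k' assume "k' \<in> {k'. adjacent n l k k'}"
    then have adj: "adjacent n l k k'" by simp
    obtain i' where i': "step_pos k i'" "length k' = length k"
      "\<forall>j<length k. j \<noteq> i' \<and> j \<noteq> i' + 1 \<longrightarrow> k' ! j = k ! j"
      "(k' ! i' = k ! (i' + 1) \<and> k' ! (i' + 1) = k ! i') \<or>
       (k ! i' < k' ! (i' + 1) \<and> k' ! (i' + 1) < k' ! i' \<and> k' ! i' < k ! (i' + 1) \<and> k' ! i' + k' ! (i' + 1) = k ! i' + k ! (i' + 1))"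
      using adj_char[OF n adj] by blast
    have ii: "i' = i" using step_pos_unique i i'(1) by blast
    have il: "i + 1 < length k" "k ! i \<le> k ! (i + 1)" using i unfolding step_pos_def by auto
    have "k' = k[i := k' ! i, i + 1 := k' ! (i + 1)]"
      using i' il unfolding ii by (intro nth_equalityI) (auto simp: nth_list_update)
    moreover have "(k' ! i, k' ! (i + 1)) \<in> {k ! i..k ! (i + 1)} \<times> {k ! i..k ! (i + 1)}"
      using i'(4) il unfolding ii by auto
    ultimately show "k' \<in> (\<lambda>(a, b). k[i := a, i + 1 := b]) ` ({k ! i..k ! (i + 1)} \<times> {k ! i..k ! (i + 1)})"
      by force
  qed
  then show ?thesis by (rule finite_subset) auto
qed

section \<open>Paths\<close>

definition paths :: "nat \<Rightarrow> nat \<Rightarrow> int list \<Rightarrow> int list \<Rightarrow> int list list set" where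
  "paths n l k w = {V. admissible n l V \<and> hd V = k \<and> last V = w}"

lemma admissible_Cons:
  "admissible n l (k # V) \<longleftrightarrow> (V = [] \<or> (adjacent n l k (hd V) \<and> admissible n l V))"
proof
  assume a: "admissible n l (k # V)"
  show "V = [] \<or> (adjacent n l k (hd V) \<and> admissible n l V)"
  proof (cases V)
    case Nil then show ?thesis by simp
  next
    case (Cons x V')
    have "0 + 1 < length (k # V)" using Cons by simp
    then have "adjacent n l ((k # V) ! 0) ((k # V) ! (0 + 1))" using a unfolding admissible_def by blast
    then have "adjacent n l k x" using Cons by simp
    moreover have "admissible n l V" unfolding admissible_def
    proof (intro conjI allI impI)
      show "V \<noteq> []" using Cons by simp
      fix j assume "j + 1 < length V"
      then have "Suc j + 1 < length (k # V)" by simp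
      then have "adjacent n l ((k # V) ! Suc j) ((k # V) ! (Suc j + 1))" using a unfolding admissible_def by blast
      then show "adjacent n l (V ! j) (V ! (j + 1))" by simp
    qed
    ultimately show ?thesis using Cons by simp
  qed
next
  assume a: "V = [] \<or> (adjacent n l k (hd V) \<and> admissible n l V)"
  show "admissible n l (k # V)" unfolding admissible_def
  proof (intro conjI allI impI)
    show "k # V \<noteq> []" by simp
    fix j assume j: "j + 1 < length (k # V)"
    show "adjacent n l ((k # V) ! j) ((k # V) ! (j + 1))"
    proof (cases j)
      case 0
      then have "V \<noteq> []" using j by auto
      then have "adjacent n l k (hd V)" using a by blast
      then show ?thesis using 0 \<open>V \<noteq> []\<close> by (simp add: hd_conv_nth)
    next
      case (Suc j')
      then have "V \<noteq> []" "j' + 1 < length V" using j by auto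
      have "admissible n l V" using a \<open>V \<noteq> []\<close> by blast
      then have "adjacent n l (V ! j') (V ! (j' + 1))" using \<open>j' + 1 < length V\<close> unfolding admissible_def by blast
      then show ?thesis using Suc by simp
    qed
  qed
qed

lemma paths_sorted:
  assumes "sorted_wrt (>) k"
  shows "paths n l k w = (if w = k then {[k]} else {})"
proof -
  have A: "V = [k] \<and> w = k" if V: "V \<in> paths n l k w" for V
  proof (cases V)
    case Nil then show ?thesis using V unfolding paths_def admissible_def by simp
  next
    case (Cons x V')
    have x: "x = k" using V Cons unfolding paths_def by simp
    have ad: "admissible n l (k # V')" using V Cons x unfolding paths_def by simp
    have "\<not> adjacent n l k (hd V')" using sorted_no_adj[OF assms] by blast
    then have "V' = []" using ad admissible_Cons[of n l k V'] by simp
    then show ?thesis using V Cons x unfolding paths_def by simp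
  qed
  have B: "[k] \<in> paths n l k k" unfolding paths_def admissible_def by simp
  show ?thesis
  proof (cases "w = k")
    case True
    have "paths n l k w = {[k]}"
    proof (intro set_eqI iffI)
      fix V assume "V \<in> paths n l k w" then show "V \<in> {[k]}" using A by simp
    next
      fix V assume "V \<in> {[k]}" then show "V \<in> paths n l k w" using B True by simp
    qed
    then show ?thesis using True by simp
  next
    case False
    have "paths n l k w = {}"
    proof (intro set_eqI iffI)
      fix V assume "V \<in> paths n l k w" then show "V \<in> {}" using A False by blast
    qed simp
    then show ?thesis using False by simp
  qed
qed

lemma paths_cons:
  assumes ns: "\<not> sorted_wrt (>) k" and w: "sorted_wrt (>) w"
  shows "paths n l k w = (\<Union>k'\<in>{k'. adjacent n l k k'}. Cons k ` paths n l k' w)"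
proof
  show "paths n l k w \<subseteq> (\<Union>k'\<in>{k'. adjacent n l k k'}. Cons k ` paths n l k' w)"
  proof
    fix V assume V: "V \<in> paths n l k w"
    have Vne: "V \<noteq> []" using V unfolding paths_def admissible_def by simp
    then obtain x V' where V': "V = x # V'" by (cases V) auto
    have x: "x = k" using V V' unfolding paths_def by simp
    have V'ne: "V' \<noteq> []"
    proof
      assume "V' = []"
      then have "w = k" using V V' x unfolding paths_def by simp
      then show False using ns w by simp
    qed
    have ad: "admissible n l (k # V')" using V V' x unfolding paths_def by simp
    then have a1: "adjacent n l k (hd V')" "admissible n l V'" using V'ne admissible_Cons[of n l k V'] by auto
    have "last V' = w" using V V' V'ne unfolding paths_def by simp
    then have "V' \<in> paths n l (hd V') w" using a1 unfolding paths_def by simp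
    then show "V \<in> (\<Union>k'\<in>{k'. adjacent n l k k'}. Cons k ` paths n l k' w)"
      using a1 V' x by blast
  qed
next
  show "(\<Union>k'\<in>{k'. adjacent n l k k'}. Cons k ` paths n l k' w) \<subseteq> paths n l k w"
  proof
    fix V assume "V \<in> (\<Union>k'\<in>{k'. adjacent n l k k'}. Cons k ` paths n l k' w)"
    then obtain k' V' where a: "adjacent n l k k'" "V' \<in> paths n l k' w" "V = k # V'" by blast
    have ne: "V' \<noteq> []" using a(2) unfolding paths_def admissible_def by simp
    have "admissible n l V'" "hd V' = k'" "last V' = w" using a(2) unfolding paths_def by auto
    then have "admissible n l (k # V')" using a(1) admissible_Cons[of n l k V'] by simp
    then show "V \<in> paths n l k w" using a(3) ne \<open>last V' = w\<close> unfolding paths_def by simp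
  qed
qed

lemma alpha_cons: "V \<noteq> [] \<Longrightarrow> alphaV n l (k # V) q = step_coeff n l k (hd V) q * alphaV n l V q"
proof -
  assume "V \<noteq> []"
  then obtain m where m: "length V = Suc m" by (cases V) auto
  have "alphaV n l (k # V) q = (\<Prod>j<Suc m. step_coeff n l ((k # V) ! j) ((k # V) ! (j + 1)) q)"
    unfolding alphaV_def by (simp add: m del: prod.lessThan_Suc)
  also have "\<dots> = step_coeff n l k (V ! 0) q * (\<Prod>j<m. step_coeff n l (V ! j) (V ! (j + 1)) q)"
    by (subst prod.lessThan_Suc_shift) simp
  also have "\<dots> = step_coeff n l k (hd V) q * alphaV n l V q"
    unfolding alphaV_def m using \<open>V \<noteq> []\<close> by (simp add: hd_conv_nth)
  finally show ?thesis .
qed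

lemma mV_cons: "V \<noteq> [] \<Longrightarrow> mV (k # V) = mstep k (hd V) + mV V"
proof -
  assume "V \<noteq> []"
  then obtain m where m: "length V = Suc m" by (cases V) auto
  have "mV (k # V) = (\<Sum>j<Suc m. mstep ((k # V) ! j) ((k # V) ! (j + 1)))"
    unfolding mV_def by (simp add: m del: sum.lessThan_Suc)
  also have "\<dots> = mstep k (V ! 0) + (\<Sum>j<m. mstep (V ! j) (V ! (j + 1)))"
    by (subst sum.lessThan_Suc_shift) simp
  also have "\<dots> = mstep k (hd V) + mV V"
    unfolding mV_def m using \<open>V \<noteq> []\<close> by (simp add: hd_conv_nth)
  finally show ?thesis .
qed

lemma stuck_paths:
  assumes n: "n \<ge> 1" "l \<ge> 1" and sp: "step_pos k i" and eq: "k ! i = k ! (i + 1)" and w: "sorted_wrt (>) w"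
  shows "paths n l k w = {}"
proof -
  have ns: "\<not> sorted_wrt (>) k" using sorted_no_step sp by blast
  have "\<forall>V. length V = M \<longrightarrow> V \<notin> paths n l k w" for M
  proof (induction M rule: less_induct)
    case (less M)
    show ?case
    proof (intro allI impI notI)
      fix V assume V: "length V = M" "V \<in> paths n l k w"
      have "V \<in> (\<Union>k'\<in>{k'. adjacent n l k k'}. Cons k ` paths n l k' w)"
        using V(2) paths_cons[OF ns w] by simp
      then obtain V' k' where a: "V = k # V'" "adjacent n l k k'" "V' \<in> paths n l k' w"
        by blast
      have "k' = k" using stuck_adj[OF n sp eq] a(2) by blast
      then have "V' \<in> paths n l k w" using a(3) by simp
      moreover have "length V' < M" using V(1) a(1) by simp
      ultimately show False using less.IH by blast
    qed
  qed
  then show ?thesis by blast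
qed

lemma nonstuck_ne:
  assumes n: "n \<ge> 1" "l \<ge> 1" and sp: "step_pos k i" and lt: "k ! i < k ! (i + 1)" and adj: "adjacent n l k k'"
  shows "k' \<noteq> k"
proof
  assume kk: "k' = k"
  obtain i' where i': "step_pos k i'" "length k' = length k"
    "\<forall>j<length k. j \<noteq> i' \<and> j \<noteq> i' + 1 \<longrightarrow> k' ! j = k ! j"
    "(k' ! i' = k ! (i' + 1) \<and> k' ! (i' + 1) = k ! i') \<or>
     (k ! i' < k' ! (i' + 1) \<and> k' ! (i' + 1) < k' ! i' \<and> k' ! i' < k ! (i' + 1) \<and> k' ! i' + k' ! (i' + 1) = k ! i' + k ! (i' + 1))"
    using adj_char[OF n adj] by blast
  have "i' = i" using step_pos_unique sp i'(1) by blast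
  then show False using i'(4) lt kk by auto
qed

lemma finite_paths:
  assumes n: "n \<ge> 1" "l \<ge> 1" and w: "sorted_wrt (>) w"
  shows "finite (paths n l k w)"
proof (induction k rule: adj_induct[OF n])
  case (1 k)
  show ?case
  proof (cases "sorted_wrt (>) k")
    case True then show ?thesis by (simp add: paths_sorted)
  next
    case False
    then obtain i where sp: "step_pos k i" using unsorted_step by blast
    show ?thesis
    proof (cases "k ! i = k ! (i + 1)")
      case True then show ?thesis using stuck_paths[OF n sp True w] by simp
    next
      case ne: False
      then have lt: "k ! i < k ! (i + 1)" using sp unfolding step_pos_def by auto
      show ?thesis unfolding paths_cons[OF False w]
      proof (intro finite_UN_I)
        show "finite {k'. adjacent n l k k'}" by (rule finite_adj[OF n])
        fix k' assume "k' \<in> {k'. adjacent n l k k'}"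
        then have "adjacent n l k k'" "k' \<noteq> k" using nonstuck_ne[OF n sp lt] by auto
        then show "finite (Cons k ` paths n l k' w)" using 1 by blast
      qed
    qed
  qed
qed


section \<open>The expansion\<close>

definition E0 :: "nat \<Rightarrow> nat \<Rightarrow> int list \<Rightarrow> int list \<Rightarrow> real \<Rightarrow> real" where
  "E0 n l k w q = (if sorted_wrt (>) w then (\<Sum>V\<in>paths n l k w. alphaV n l V q) else 0)"

lemma alpha_single: "alphaV n l [k] q = 1"
  unfolding alphaV_def by simp

lemma E0_sorted: "sorted_wrt (>) k \<Longrightarrow> E0 n l k = (\<lambda>w q. if w = k then 1 else 0)"
proof (intro ext)
  fix w q assume k: "sorted_wrt (>) k"
  show "E0 n l k w q = (if w = k then 1 else 0)"
  proof (cases "sorted_wrt (>) w")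
    case True then show ?thesis unfolding E0_def using k by (simp add: paths_sorted alpha_single)
  next
    case False then have "w \<noteq> k" using k by blast
    then show ?thesis unfolding E0_def using False by simp
  qed
qed

lemma E0_rec:
  assumes n: "n \<ge> 1" "l \<ge> 1" and ns: "\<not> sorted_wrt (>) k"
  shows "E0 n l k w q = (\<Sum>k'\<in>{k'. adjacent n l k k'}. step_coeff n l k k' q * E0 n l k' w q)"
proof (cases "sorted_wrt (>) w")
  case False then show ?thesis unfolding E0_def by simp
next
  case w: True
  let ?A = "{k'. adjacent n l k k'}"
  have fA: "finite ?A" by (rule finite_adj[OF n])
  have "E0 n l k w q = (\<Sum>V\<in>(\<Union>k'\<in>?A. Cons k ` paths n l k' w). alphaV n l V q)"
    unfolding E0_def using w paths_cons[OF ns w] by simp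
  also have "\<dots> = (\<Sum>k'\<in>?A. \<Sum>V\<in>Cons k ` paths n l k' w. alphaV n l V q)"
  proof (rule sum.UNION_disjoint[OF fA])
    show "\<forall>i\<in>?A. finite (Cons k ` paths n l i w)" using finite_paths[OF n w] by blast
    show "\<forall>i\<in>?A. \<forall>j\<in>?A. i \<noteq> j \<longrightarrow> Cons k ` paths n l i w \<inter> Cons k ` paths n l j w = {}"
      unfolding paths_def by auto
  qed
  also have "\<dots> = (\<Sum>k'\<in>?A. \<Sum>V'\<in>paths n l k' w. alphaV n l (k # V') q)"
  proof (rule sum.cong[OF refl])
    fix k' show "(\<Sum>V\<in>Cons k ` paths n l k' w. alphaV n l V q) = (\<Sum>V'\<in>paths n l k' w. alphaV n l (k # V') q)"
      by (subst sum.reindex) (auto simp: inj_on_def)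
  qed
  also have "\<dots> = (\<Sum>k'\<in>?A. \<Sum>V'\<in>paths n l k' w. step_coeff n l k k' q * alphaV n l V' q)"
  proof (intro sum.cong refl)
    fix k' V' assume "V' \<in> paths n l k' w"
    then have "V' \<noteq> []" "hd V' = k'" unfolding paths_def admissible_def by auto
    then show "alphaV n l (k # V') q = step_coeff n l k k' q * alphaV n l V' q" using alpha_cons[of V' n l k] by simp
  qed
  also have "\<dots> = (\<Sum>k'\<in>?A. step_coeff n l k k' q * E0 n l k' w q)"
    unfolding E0_def using w by (simp add: sum_distrib_left)
  finally show ?thesis .
qed

lemma E0_ok: "n \<ge> 1 \<Longrightarrow> l \<ge> 1 \<Longrightarrow> straightening_ok n l (E0 n l)"
  unfolding straightening_ok_def using E0_sorted E0_rec by blast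

lemma ok_sortedD: "straightening_ok n l E \<Longrightarrow> sorted_wrt (>) k \<Longrightarrow> E k = (\<lambda>w q. if w = k then 1 else 0)"
  unfolding straightening_ok_def by blast

lemma ok_unsortedD: "straightening_ok n l E \<Longrightarrow> \<not> sorted_wrt (>) k \<Longrightarrow>
   E k = (\<lambda>w q. \<Sum>k'\<in>{k'. adjacent n l k k'}. step_coeff n l k k' q * E k' w q)"
  unfolding straightening_ok_def by blast

lemma ok_stuck:
  assumes n: "n \<ge> 1" "l \<ge> 1" and ok: "straightening_ok n l E"
    and sp: "step_pos k i" and eq: "k ! i = k ! (i + 1)"
  shows "E k w q = 0"
proof -
  have ns: "\<not> sorted_wrt (>) k" using sorted_no_step sp by blast
  have A: "{k'. adjacent n l k k'} = {k}" using stuck_adj[OF n sp eq] by blast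
  have "E k w q = (\<Sum>k'\<in>{k'. adjacent n l k k'}. step_coeff n l k k' q * E k' w q)"
    using ok_unsortedD[OF ok ns] by simp
  also have "\<dots> = - E k w q" unfolding A using stuck_coeff[OF sp eq] by simp
  finally show ?thesis by simp
qed

lemma ok_unique:
  assumes n: "n \<ge> 1" "l \<ge> 1" and ok: "straightening_ok n l E"
  shows "E = E0 n l"
proof
  fix k
  show "E k = E0 n l k"
  proof (induction k rule: adj_induct[OF n])
    case (1 k)
    show ?case
    proof (cases "sorted_wrt (>) k")
      case True
      then show ?thesis using ok_sortedD[OF ok] E0_sorted by simp
    next
      case ns: False
      then obtain i where sp: "step_pos k i" using unsorted_step by blast
      show ?thesis
      proof (cases "k ! i = k ! (i + 1)")
        case True
        show ?thesis using ok_stuck[OF n ok sp True] ok_stuck[OF n E0_ok[OF n] sp True] by (intro ext) simp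
      next
        case False
        then have lt: "k ! i < k ! (i + 1)" using sp unfolding step_pos_def by auto
        have IH: "E k' = E0 n l k'" if "adjacent n l k k'" for k'
          using 1 that nonstuck_ne[OF n sp lt] by blast
        have "E k = (\<lambda>w q. \<Sum>k'\<in>{k'. adjacent n l k k'}. step_coeff n l k k' q * E k' w q)"
          by (rule ok_unsortedD[OF ok ns])
        also have "\<dots> = (\<lambda>w q. \<Sum>k'\<in>{k'. adjacent n l k k'}. step_coeff n l k k' q * E0 n l k' w q)"
          using IH by (intro ext sum.cong) auto
        also have "\<dots> = E0 n l k" using E0_rec[OF n ns] by (intro ext) simp
        finally show ?thesis .
      qed
    qed
  qed
qed

lemma expansion_eq: "n \<ge> 1 \<Longrightarrow> l \<ge> 1 \<Longrightarrow> expansion n l = E0 n l"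
  unfolding expansion_def using E0_ok ok_unique by blast


section \<open>Sequences at q = 1\<close>

lemma adm_step:
  assumes "admissible n l V" "j + 1 < length V"
  shows "adjacent n l (V ! j) (V ! (j + 1))"
  using assms unfolding admissible_def by blast

lemma adj_step_pos: "adjacent n l k k' \<Longrightarrow> \<exists>i. step_pos k i"
  unfolding adjacent_def by blast

lemma mstep_le1: "mstep k k' \<le> 1" unfolding mstep_def by simp

lemma alphaV_D1: "D1 (alphaV n l V)"
  unfolding alphaV_def by (rule D1_prod) (rule step_coeff_D1)

lemma alpha_at1_zero:
  assumes "admissible n l V" "mV V \<ge> 1"
  shows "alphaV n l V 1 = 0"
proof -
  have "mV V \<noteq> 0" using assms(2) by simp
  then have "(\<Sum>j<length V - 1. mstep (V ! j) (V ! (j + 1))) \<noteq> 0" unfolding mV_def .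
  then have "\<exists>j\<in>{..<length V - 1}. mstep (V ! j) (V ! (j + 1)) \<noteq> 0"
  proof (rule contrapos_np)
    assume "\<not> (\<exists>j\<in>{..<length V - 1}. mstep (V ! j) (V ! (j + 1)) \<noteq> 0)"
    then have "\<forall>j\<in>{..<length V - 1}. mstep (V ! j) (V ! (j + 1)) = 0" by blast
    then show "(\<Sum>j<length V - 1. mstep (V ! j) (V ! (j + 1))) = 0" by (rule sum.neutral)
  qed
  then obtain j where j: "j < length V - 1" "mstep (V ! j) (V ! (j + 1)) \<noteq> 0" by blast
  have "adjacent n l (V ! j) (V ! (j + 1))" using adm_step[OF assms(1)] j(1) by simp
  then obtain i where "step_pos (V ! j) i" using adj_step_pos by blast
  then have "step_coeff n l (V ! j) (V ! (j + 1)) 1 = 0" using step_coeff_at1 j(2) by simp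
  then show ?thesis unfolding alphaV_def using j(1) by (intro prod_zero) auto
qed

lemma two_indices:
  assumes "mV V \<ge> 2"
  obtains j1 j2 where "j1 < length V - 1" "j2 < length V - 1" "j1 \<noteq> j2"
    "mstep (V ! j1) (V ! (j1 + 1)) \<noteq> 0" "mstep (V ! j2) (V ! (j2 + 1)) \<noteq> 0"
proof -
  define L where "L = length V - 1"
  define g where "g j = mstep (V ! j) (V ! (j + 1))" for j
  define J where "J = {j. j < L \<and> g j \<noteq> 0}"
  have fJ: "finite J" unfolding J_def by simp
  have "mV V = (\<Sum>j<L. g j)" unfolding mV_def L_def g_def by simp
  also have "\<dots> = (\<Sum>j\<in>J. g j)" unfolding J_def by (intro sum.mono_neutral_right) auto
  also have "\<dots> \<le> (\<Sum>j\<in>J. 1)" unfolding g_def by (intro sum_mono) (rule mstep_le1)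
  also have "\<dots> = card J" by simp
  finally have cJ: "card J \<ge> 2" using assms by simp
  then have "J \<noteq> {}" by auto
  then obtain j1 where j1: "j1 \<in> J" by blast
  have "card (J - {j1}) \<ge> 1" using cJ j1 fJ by (simp add: card_Diff_singleton)
  then have "J - {j1} \<noteq> {}" by (metis card.empty not_one_le_zero)
  then obtain j2 where j2: "j2 \<in> J" "j2 \<noteq> j1" by blast
  show ?thesis using that[of j1 j2] j1 j2 unfolding J_def L_def g_def by auto
qed

lemma alpha_deriv_zero:
  assumes "admissible n l V" "mV V \<ge> 2"
  shows "deriv (alphaV n l V) 1 = 0"
proof -
  obtain j1 j2 where jj: "j1 < length V - 1" "j2 < length V - 1" "j1 \<noteq> j2"
    "mstep (V ! j1) (V ! (j1 + 1)) \<noteq> 0" "mstep (V ! j2) (V ! (j2 + 1)) \<noteq> 0"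
    using two_indices[OF assms(2)] by blast
  define f where "f j = step_coeff n l (V ! j) (V ! (j + 1))" for j
  have z: "f j 1 = 0" if "j < length V - 1" "mstep (V ! j) (V ! (j + 1)) \<noteq> 0" for j
  proof -
    have "adjacent n l (V ! j) (V ! (j + 1))" using adm_step[OF assms(1)] that(1) by simp
    then obtain i where "step_pos (V ! j) i" using adj_step_pos by blast
    then show ?thesis unfolding f_def using step_coeff_at1 that(2) by simp
  qed
  have "\<forall>j. \<exists>D. (f j has_field_derivative D) (at 1)" using step_coeff_D1 unfolding D1_def f_def by blast
  then have "\<exists>D. \<forall>j. (f j has_field_derivative D j) (at 1)" by (rule choice)
  then obtain D where D: "\<And>j. (f j has_field_derivative D j) (at 1)" by blast
  let ?A = "{..<length V - 1}"
  have "((\<lambda>u. \<Prod>j\<in>?A. f j u) has_field_derivative (\<Sum>j\<in>?A. D j * (\<Prod>y\<in>?A - {j}. f y 1))) (at 1)"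
    by (rule has_field_derivative_prod) (rule D)
  moreover have "(\<lambda>u. \<Prod>j\<in>?A. f j u) = alphaV n l V" unfolding alphaV_def f_def by simp
  moreover have "(\<Sum>j\<in>?A. D j * (\<Prod>y\<in>?A - {j}. f y 1)) = 0"
  proof (intro sum.neutral ballI)
    fix j assume "j \<in> ?A"
    have "(\<Prod>y\<in>?A - {j}. f y 1) = 0"
    proof (cases "j = j1")
      case True
      then show ?thesis using jj z[of j2] by (intro prod_zero) auto
    next
      case False
      then show ?thesis using jj z[of j1] by (intro prod_zero) auto
    qed
    then show "D j * (\<Prod>y\<in>?A - {j}. f y 1) = 0" by simp
  qed
  ultimately have "(alphaV n l V has_field_derivative 0) (at 1)" by simp
  then show ?thesis by (rule DERIV_imp_deriv)
qed

lemma mset_path: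
  assumes n: "n \<ge> 1" "l \<ge> 1" and adm: "admissible n l V" and m0: "mV V = 0"
  shows "mset (last V) = mset (hd V)"
proof -
  have all0: "\<forall>t\<in>{..<length V - 1}. mstep (V ! t) (V ! (t + 1)) = 0"
    using m0 unfolding mV_def by simp
  have st: "mset (V ! (j + 1)) = mset (V ! j)" if j: "j + 1 < length V" for j
  proof -
    have adj: "adjacent n l (V ! j) (V ! (j + 1))" by (rule adm_step[OF adm j])
    have ms: "mstep (V ! j) (V ! (j + 1)) = 0" using all0 j by simp
    obtain i where i: "step_pos (V ! j) i" "length (V ! (j + 1)) = length (V ! j)"
      "\<forall>t<length (V ! j). t \<noteq> i \<and> t \<noteq> i + 1 \<longrightarrow> (V ! (j + 1)) ! t = (V ! j) ! t"
      using adj_char[OF n adj] by blast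
    have sw: "(V ! (j + 1)) ! i = (V ! j) ! (i + 1) \<and> (V ! (j + 1)) ! (i + 1) = (V ! j) ! i"
    proof (rule ccontr)
      assume "\<not> ?thesis"
      then have "mstep (V ! j) (V ! (j + 1)) = 1" using mstep_eq[OF i(1)] by simp
      then show False using ms by simp
    qed
    have i3: "\<And>t. t < length (V ! j) \<Longrightarrow> t \<noteq> i \<Longrightarrow> t \<noteq> i + 1 \<Longrightarrow> (V ! (j + 1)) ! t = (V ! j) ! t"
      using i(3) by blast
    have e: "V ! (j + 1) = (V ! j)[i := (V ! j) ! (i + 1), i + 1 := (V ! j) ! i]"
      by (rule adj_swap_eq[OF i(1) i(2) i3 conjunct1[OF sw] conjunct2[OF sw]])
    have il: "i + 1 < length (V ! j)" "i < length (V ! j)" using i(1) unfolding step_pos_def by auto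
    have "mset ((V ! j)[i := (V ! j) ! (i + 1), i + 1 := (V ! j) ! i]) = mset (V ! j)"
      by (rule mset_swap[OF il])
    then show ?thesis unfolding e[symmetric] .
  qed
  have P: "j < length V \<longrightarrow> mset (V ! j) = mset (V ! 0)" for j
  proof (induction j)
    case 0 show ?case by simp
  next
    case (Suc j)
    show ?case
    proof
      assume "Suc j < length V"
      then have "mset (V ! (j + 1)) = mset (V ! j)" "j < length V" using st[of j] by auto
      then show "mset (V ! Suc j) = mset (V ! 0)" using Suc by simp
    qed
  qed
  have ne: "V \<noteq> []" using adm unfolding admissible_def by simp
  then have "mset (V ! (length V - 1)) = mset (V ! 0)" using P[of "length V - 1"] by simp
  then show ?thesis using ne by (simp add: last_conv_nth hd_conv_nth)
qed

section \<open>Partitions\<close>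

lemma part_ge1: "is_partition p \<Longrightarrow> 1 \<le> i \<Longrightarrow> i \<le> length p \<Longrightarrow> part p i \<ge> 1"
proof -
  assume a: "is_partition p" "1 \<le> i" "i \<le> length p"
  then have "p ! (i - 1) \<in> set p" by simp
  then have "p ! (i - 1) \<noteq> 0" using a(1) unfolding is_partition_def by metis
  then show ?thesis unfolding part_def using a by simp
qed

lemma part_zero: "length p < i \<Longrightarrow> part p i = 0"
  unfolding part_def by simp

lemma part_mono:
  assumes p: "is_partition p" and ij: "1 \<le> i" "i \<le> j"
  shows "part p j \<le> part p i"
proof (cases "j \<le> length p")
  case True
  show ?thesis
  proof (cases "i = j")
    case True then show ?thesis by simp
  next
    case False
    then have "i - 1 < j - 1" "j - 1 < length p" using ij True by auto
    then have "p ! (j - 1) \<le> p ! (i - 1)" using p unfolding is_partition_def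
      using sorted_wrt_nth_less[of "(\<ge>)" p "i - 1" "j - 1"] by blast
    then show ?thesis unfolding part_def using True ij by auto
  qed
next
  case False then show ?thesis by (simp add: part_zero)
qed

lemma length_le_psize: "is_partition p \<Longrightarrow> length p \<le> psize p"
proof -
  assume "is_partition p"
  then have "\<forall>x\<in>set p. x \<ge> 1" unfolding is_partition_def by (metis less_one not_le)
  then show ?thesis unfolding psize_def
  proof (induction p)
    case Nil then show ?case by simp
  next
    case (Cons a p) then show ?case by simp
  qed
qed

lemma part_inj:
  assumes p: "is_partition p" and p': "is_partition p'" and eq: "\<And>i. 1 \<le> i \<Longrightarrow> part p i = part p' i"
  shows "p = p'"
proof -
  have len: "length p = length p'"
  proof (rule ccontr)
    assume "length p \<noteq> length p'"
    then consider "length p < length p'" | "length p' < length p" by linarith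
    then show False
    proof cases
      case 1
      then have "part p' (length p') \<ge> 1" using part_ge1[OF p'] by simp
      moreover have "part p (length p') = 0" using 1 part_zero by simp
      ultimately show False using eq[of "length p'"] 1 by simp
    next
      case 2
      then have "part p (length p) \<ge> 1" using part_ge1[OF p] by simp
      moreover have "part p' (length p) = 0" using 2 part_zero by simp
      ultimately show False using eq[of "length p"] 2 by simp
    qed
  qed
  show ?thesis
  proof (rule nth_equalityI[OF len])
    fix j assume j: "j < length p"
    have "part p (j + 1) = part p' (j + 1)" using eq by simp
    then show "p ! j = p' ! j" unfolding part_def using j len by simp
  qed
qed

lemma beta_length: "length (beta s p) = psize p"
  unfolding beta_def by simp

lemma beta_nth: "j < psize p \<Longrightarrow> beta s p ! j = int (part p (j + 1)) + s + 1 - int (j + 1)"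
proof -
  assume j: "j < psize p"
  have "[1..<psize p + 1] ! j = 1 + j" using j by (intro nth_upt) simp
  moreover have "j < length [1..<psize p + 1]" using j by simp
  ultimately show ?thesis unfolding beta_def by (simp del: upt_Suc)
qed

lemma beta_sorted: "is_partition p \<Longrightarrow> sorted_wrt (>) (beta s p)"
proof -
  assume p: "is_partition p"
  show ?thesis unfolding sorted_wrt_iff_nth_less
  proof (intro allI impI)
    fix a b assume ab: "a < b" "b < length (beta s p)"
    then have "part p (b + 1) \<le> part p (a + 1)" using part_mono[OF p] by simp
    then show "beta s p ! b < beta s p ! a" using ab by (simp add: beta_length beta_nth)
  qed
qed

lemma beta_inj:
  assumes p: "is_partition p" and p': "is_partition p'" and r: "psize p = r" "psize p' = r"
    and eq: "beta s p = beta s p'"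
  shows "p = p'"
proof (rule part_inj[OF p p'])
  fix i :: nat assume i: "1 \<le> i"
  show "part p i = part p' i"
  proof (cases "i \<le> r")
    case True
    then have "beta s p ! (i - 1) = beta s p' ! (i - 1)" using eq by simp
    then show ?thesis using True i r by (simp add: beta_nth)
  next
    case False
    then have "length p < i" "length p' < i" using length_le_psize[OF p] length_le_psize[OF p'] r by auto
    then show ?thesis by (simp add: part_zero)
  qed
qed

lemma strict_dec_range_eq:
  fixes F G :: "nat \<Rightarrow> int"
  assumes F: "\<And>i j. i < j \<Longrightarrow> F j < F i" and G: "\<And>i j. i < j \<Longrightarrow> G j < G i"
    and R: "range F = range G"
  shows "F j = G j"
proof (induction j rule: less_induct)
  case (less j)
  have injF: "F a = F b \<Longrightarrow> a = b" for a b using F[of a b] F[of b a] by (cases a b rule: linorder_cases) auto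
  have injG: "G a = G b \<Longrightarrow> a = b" for a b using G[of a b] G[of b a] by (cases a b rule: linorder_cases) auto
  have "F j \<in> range G" using R by (metis rangeI)
  then obtain j' where j': "F j = G j'" by auto
  have "G j \<in> range F" using R by (metis rangeI)
  then obtain j'' where j'': "G j = F j''" by auto
  show ?case
  proof (cases "j' < j")
    case True
    then have "G j' = F j'" using less by simp
    then have "j = j'" using j' injF by simp
    then show ?thesis using True by simp
  next
    case False
    show ?thesis
    proof (cases "j' = j")
      case True then show ?thesis using j' by simp
    next
      case ne: False
      then have jj': "j < j'" using False by simp
      show ?thesis
      proof (cases "j'' < j")
        case True
        then have "F j'' = G j''" using less by simp
        then have "j = j''" using j'' injG by simp
        then show ?thesis using True by simp
      next
        case False
        show ?thesis
        proof (cases "j'' = j")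
          case True then show ?thesis using j'' by simp
        next
          case False
          then have "j < j''" using \<open>\<not> j'' < j\<close> by simp
          then have "F j'' < F j" by (rule F)
          moreover have "G j' < G j" using jj' by (rule G)
          ultimately show ?thesis using j' j'' by simp
        qed
      qed
    qed
  qed
qed

lemma sdec_mset_eq:
  fixes xs ys :: "int list"
  assumes "sorted_wrt (>) xs" "sorted_wrt (>) ys" "mset xs = mset ys"
  shows "xs = ys"
proof -
  have "sorted_wrt (\<lambda>x y. y \<le> x) xs" by (rule sorted_wrt_mono_rel[OF _ assms(1)]) auto
  then have s1: "sorted (rev xs)" by (simp add: sorted_wrt_rev)
  have "sorted_wrt (\<lambda>x y. y \<le> x) ys" by (rule sorted_wrt_mono_rel[OF _ assms(2)]) auto
  then have s2: "sorted (rev ys)" by (simp add: sorted_wrt_rev)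
  have "sort (rev ys) = rev xs" using s1 assms(3) by (intro properties_for_sort) auto
  moreover have "sort (rev ys) = rev ys" using s2 by (intro properties_for_sort) auto
  ultimately show ?thesis by simp
qed


lemma phidd_inj:
  assumes n: "n \<ge> 1" "l \<ge> 1" and e1: "phi n l k = phi n l k'" and e2: "dd n l k = dd n l k'"
  shows "k = k'"
proof -
  define u where "u = k - 1"
  define v where "v = k' - 1"
  define N where "N = int n"
  define L where "L = int l"
  have N: "N > 0" "L > 0" using n unfolding N_def L_def by auto
  have h1: "u mod N + N * (u div (N * L)) = v mod N + N * (v div (N * L))"
    using e1 unfolding phi_def cc_def mm_def u_def v_def N_def L_def by simp
  have "(u mod N + N * (u div (N * L))) mod N = u mod N" by simp
  moreover have "(v mod N + N * (v div (N * L))) mod N = v mod N" by simp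
  ultimately have m: "u mod N = v mod N" using h1 by metis
  then have "N * (u div (N * L)) = N * (v div (N * L))" using h1 by simp
  then have d: "u div (N * L) = v div (N * L)" using N by simp
  have h2: "(u div N) mod L = (v div N) mod L"
    using e2 unfolding dd_def u_def v_def N_def L_def by simp
  have "u div N = L * (u div N div L) + (u div N) mod L" by simp
  also have "u div N div L = u div (N * L)" using N by (simp add: zdiv_zmult2_eq)
  finally have a: "u div N = L * (u div (N * L)) + (u div N) mod L" .
  have "v div N = L * (v div N div L) + (v div N) mod L" by simp
  also have "v div N div L = v div (N * L)" using N by (simp add: zdiv_zmult2_eq)
  finally have b: "v div N = L * (v div (N * L)) + (v div N) mod L" .
  have "u div N = v div N" using a b d h2 by simp
  then have "u = v" using m by (metis div_mult_mod_eq)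
  then show ?thesis unfolding u_def v_def by simp
qed

definition Kset :: "int \<Rightarrow> nat list \<Rightarrow> int set" where
  "Kset s p = {k. \<exists>i\<ge>1. k = int (part p i) + s + 1 - int i}"

lemma Kset_range: "Kset s p = range (\<lambda>j. int (part p (j + 1)) + s - int j)"
proof (intro set_eqI iffI)
  fix k assume "k \<in> Kset s p"
  then obtain i where i: "i \<ge> 1" "k = int (part p i) + s + 1 - int i" unfolding Kset_def by blast
  then have "k = int (part p ((i - 1) + 1)) + s - int (i - 1)" by simp
  then show "k \<in> range (\<lambda>j. int (part p (j + 1)) + s - int j)" by blast
next
  fix k assume "k \<in> range (\<lambda>j. int (part p (j + 1)) + s - int j)"
  then obtain j where "k = int (part p (j + 1)) + s - int j" by blast
  then have "k = int (part p (j + 1)) + s + 1 - int (j + 1)" by simp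
  then show "k \<in> Kset s p" unfolding Kset_def by (intro CollectI exI[of _ "j + 1"]) simp
qed

lemma Kset_inj:
  assumes p: "is_partition p" and p': "is_partition p'" and eq: "Kset s p = Kset s p'"
  shows "p = p'"
proof (rule part_inj[OF p p'])
  define F where "F j = int (part p (j + 1)) + s - int j" for j
  define G where "G j = int (part p' (j + 1)) + s - int j" for j
  have F: "F j < F i" if "i < j" for i j
    using part_mono[OF p, of "i + 1" "j + 1"] that unfolding F_def by simp
  have G: "G j < G i" if "i < j" for i j
    using part_mono[OF p', of "i + 1" "j + 1"] that unfolding G_def by simp
  have R: "range F = range G" using eq unfolding Kset_range F_def G_def by simp
  fix i :: nat assume i: "1 \<le> i"
  have "F (i - 1) = G (i - 1)" by (rule strict_dec_range_eq[OF F G R])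
  then show "part p i = part p' i" unfolding F_def G_def using i by simp
qed

lemma corresp_rhs: "corresp n l sl P p \<longleftrightarrow>
   {(int (part (P ! (b - 1)) i) + sl ! (b - 1) + 1 - int i, int b) | i b. 1 \<le> i \<and> 1 \<le> b \<and> b \<le> l}
   = (\<lambda>k. (phi n l k, dd n l k)) ` Kset (sum_list sl) p"
  unfolding corresp_def Kset_def by (intro arg_cong[where f="\<lambda>X. _ = X"]) auto

lemma corresp_unique:
  assumes n: "n \<ge> 1" "l \<ge> 1" and p: "is_partition p" and p': "is_partition p'"
    and c: "corresp n l sl P p" and c': "corresp n l sl P p'"
  shows "p = p'"
proof -
  let ?f = "\<lambda>k. (phi n l k, dd n l k)"
  have inj: "inj ?f" unfolding inj_def using phidd_inj[OF n] by blast
  have "?f ` Kset (sum_list sl) p = ?f ` Kset (sum_list sl) p'" using c c' unfolding corresp_rhs by simp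
  then have "Kset (sum_list sl) p = Kset (sum_list sl) p'" using inj by (simp add: inj_image_eq_iff)
  then show ?thesis by (rule Kset_inj[OF p p'])
qed


definition LHSset :: "nat \<Rightarrow> int list \<Rightarrow> nat list list \<Rightarrow> (int \<times> int) set" where
  "LHSset l sl P = {(int (part (P ! (b - 1)) i) + sl ! (b - 1) + 1 - int i, int b) | i b. 1 \<le> i \<and> 1 \<le> b \<and> b \<le> l}"

lemma LHS_slice:
  assumes b: "1 \<le> b" "b \<le> l"
  shows "{x. (x, int b) \<in> LHSset l sl P} = Kset (sl ! (b - 1)) (P ! (b - 1))"
proof (intro set_eqI iffI)
  fix x assume "x \<in> {x. (x, int b) \<in> LHSset l sl P}"
  then obtain i b' where "1 \<le> i" "x = int (part (P ! (b' - 1)) i) + sl ! (b' - 1) + 1 - int i" "int b = int b'"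
    unfolding LHSset_def by blast
  then show "x \<in> Kset (sl ! (b - 1)) (P ! (b - 1))" unfolding Kset_def by auto
next
  fix x assume "x \<in> Kset (sl ! (b - 1)) (P ! (b - 1))"
  then obtain i where "i \<ge> 1" "x = int (part (P ! (b - 1)) i) + sl ! (b - 1) + 1 - int i" unfolding Kset_def by blast
  then show "x \<in> {x. (x, int b) \<in> LHSset l sl P}" unfolding LHSset_def using b by blast
qed

lemma corresp_P:
  assumes P: "P \<in> multipartitions l m" and Q: "Q \<in> multipartitions l m"
    and c: "corresp n l sl P p" and c': "corresp n l sl Q p"
  shows "P = Q"
proof -
  have eq: "LHSset l sl P = LHSset l sl Q" using c c' unfolding corresp_def LHSset_def by simp
  have lens: "length P = l" "length Q = l" using P Q unfolding multipartitions_def by auto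
  show ?thesis
  proof (rule nth_equalityI)
    show "length P = length Q" using lens by simp
    fix j assume j: "j < length P"
    have b: "1 \<le> j + 1" "j + 1 \<le> l" using j lens by auto
    have "Kset (sl ! j) (P ! j) = Kset (sl ! j) (Q ! j)"
      using LHS_slice[OF b, of sl P] LHS_slice[OF b, of sl Q] eq by simp
    moreover have "is_partition (P ! j)" "is_partition (Q ! j)"
      using P Q j lens unfolding multipartitions_def by auto
    ultimately show "P ! j = Q ! j" using Kset_inj by blast
  qed
qed


lemma D1_deriv: "D1 f \<Longrightarrow> (f has_field_derivative deriv f 1) (at 1)"
proof -
  assume "D1 f"
  then obtain D where D: "(f has_field_derivative D) (at 1)" unfolding D1_def by blast
  then have "deriv f 1 = D" by (rule DERIV_imp_deriv)
  then show ?thesis using D by simp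
qed

theorem mainTheorem14:
  fixes n l m r :: nat and sl :: "int list" and P Q :: "nat list list" and lam mu :: "nat list"
  assumes "n \<ge> 1" and "l \<ge> 1" and "m \<ge> 1" and "length sl = l"
    and "P \<in> multipartitions l m" and "Q \<in> multipartitions l m" and "P \<noteq> Q"
    and "is_partition lam" and "is_partition mu"
    and "corresp n l sl P lam" and "corresp n l sl Q mu"
    and "psize lam = r" and "psize mu = r"
  shows "deriv (a_coef n l sl P Q) 1
         = eps n l (sum_list sl) lam mu
           * (\<Sum>V\<in>{V. good_seq n l (sum_list sl) lam mu V}. deriv (alphaV n l V) 1)"
proof -
  have n: "n \<ge> 1" "l \<ge> 1" using assms by auto
  note PP = assms(5) and QQ = assms(6) and PQ = assms(7) and plam = assms(8) and pmu = assms(9)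
    and clam = assms(10) and cmu = assms(11) and rl = assms(12) and rm = assms(13)
  define s where "s = sum_list sl"
  define bl where "bl = beta s lam"
  define bm where "bm = beta s mu"
  define k0 where "k0 = omega_act bm"
  have lm: "lam \<noteq> mu"
  proof
    assume "lam = mu"
    then have "corresp n l sl Q lam" using cmu by simp
    then have "P = Q" using corresp_P[OF PP QQ clam] by blast
    then show False using PQ by simp
  qed
  have the1: "(THE p. is_partition p \<and> corresp n l sl P p) = lam"
    using plam clam corresp_unique[OF n _ plam _ clam] by (intro the_equality) blast+
  have the2: "(THE p. is_partition p \<and> corresp n l sl Q p) = mu"
    using pmu cmu corresp_unique[OF n _ pmu _ cmu] by (intro the_equality) blast+
  have bls: "sorted_wrt (>) bl" unfolding bl_def by (rule beta_sorted[OF plam])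
  have bms: "sorted_wrt (>) bm" unfolding bm_def by (rule beta_sorted[OF pmu])
  define F where "F q = (\<Sum>V\<in>paths n l k0 bl. alphaV n l V q)" for q
  have E: "expansion n l k0 bl = F" unfolding expansion_eq[OF n] E0_def F_def using bls by (intro ext) simp
  have fin: "finite (paths n l k0 bl)" by (rule finite_paths[OF n bls])
  have nz: "mV V \<noteq> 0" if V: "V \<in> paths n l k0 bl" for V
  proof
    assume m0: "mV V = 0"
    have adm: "admissible n l V" "hd V = k0" "last V = bl" using V unfolding paths_def by auto
    have "mset bl = mset bm" using mset_path[OF n adm(1) m0] adm unfolding k0_def omega_act_def by simp
    then have "bl = bm" by (rule sdec_mset_eq[OF bls bms])
    then have "lam = mu" using beta_inj[OF plam pmu rl rm] unfolding bl_def bm_def by blast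
    then show False using lm by simp
  qed
  have F1: "F 1 = 0" unfolding F_def
  proof (rule sum.neutral, rule ballI)
    fix V assume V: "V \<in> paths n l k0 bl"
    then have "admissible n l V" unfolding paths_def by simp
    moreover have "mV V \<ge> 1" using nz[OF V] by simp
    ultimately show "alphaV n l V 1 = 0" by (rule alpha_at1_zero)
  qed
  have FD: "(F has_field_derivative (\<Sum>V\<in>paths n l k0 bl. deriv (alphaV n l V) 1)) (at 1)"
    unfolding F_def[abs_def] by (rule DERIV_sum) (rule D1_deriv[OF alphaV_D1])
  define A where "A = kappa (map (dd n l) bm) + len_v n l (omega_act bm)"
  define e where "e = int (kappa (map (dd n l) bm)) - int (kappa (map (cc n l) bm))"
  define B where "B = len_v n l bl"
  define K :: real where "K = (-1) ^ A * (-1) ^ B"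
  have ac: "a_coef n l sl P Q = (\<lambda>q. K * (q powi e * F q))"
    unfolding a_coef_def the1 the2 a_part_def
    unfolding s_def[symmetric] bm_def[symmetric] bl_def[symmetric] k0_def[symmetric] E
    unfolding A_def[symmetric] e_def[symmetric] B_def[symmetric] K_def
    by (intro ext) (simp add: mult_ac A_def k0_def)
  have P1: "((\<lambda>q. q powi e) has_field_derivative (of_int e * 1 powi (e - 1) * 1)) (at (1::real))"
    by (rule DERIV_power_int[OF DERIV_ident]) simp
  have "((\<lambda>q. K * (q powi e * F q)) has_field_derivative
         K * ((of_int e * 1 powi (e - 1) * 1) * F 1 + (\<Sum>V\<in>paths n l k0 bl. deriv (alphaV n l V) 1) * 1 powi e)) (at 1)"
    by (rule DERIV_cmult[OF DERIV_mult[OF P1 FD]])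
  then have "deriv (a_coef n l sl P Q) 1 = K * (\<Sum>V\<in>paths n l k0 bl. deriv (alphaV n l V) 1)"
    unfolding ac using F1 by (simp add: DERIV_imp_deriv)
  also have "(\<Sum>V\<in>paths n l k0 bl. deriv (alphaV n l V) 1)
      = (\<Sum>V\<in>{V. good_seq n l (sum_list sl) lam mu V}. deriv (alphaV n l V) 1)"
  proof (rule sum.mono_neutral_right[OF fin])
    show "{V. good_seq n l (sum_list sl) lam mu V} \<subseteq> paths n l k0 bl"
      unfolding good_seq_def paths_def k0_def bm_def bl_def s_def by auto
    show "\<forall>V\<in>paths n l k0 bl - {V. good_seq n l (sum_list sl) lam mu V}. deriv (alphaV n l V) 1 = 0"
    proof
      fix V assume V: "V \<in> paths n l k0 bl - {V. good_seq n l (sum_list sl) lam mu V}"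
      then have adm: "admissible n l V" "hd V = k0" "last V = bl" unfolding paths_def by auto
      have "mV V \<noteq> 1" using V adm unfolding good_seq_def k0_def bm_def bl_def s_def by auto
      moreover have "mV V \<noteq> 0" using nz V by blast
      ultimately have "mV V \<ge> 2" by simp
      then show "deriv (alphaV n l V) 1 = 0" by (rule alpha_deriv_zero[OF adm(1)])
    qed
  qed
  also have "K = eps n l (sum_list sl) lam mu"
    unfolding K_def eps_def A_def B_def bm_def bl_def s_def by (simp add: power_add)
  finally show ?thesis .
qed

end
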